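(* Let $\mathcal{X}$ be a finite nonempty set of types, $n=(n_x)_{x\in\mathcal{X}}$ nonnegative integers, and $\Phi=(\Phi_{xy})_{x,y\in\mathcal{X}}$ a real matrix, not necessarily symmetric. Define the symmetric matrix $\Phi'_{xy}=\max(\Phi_{xy},\Phi_{yx})$. Then: (i) $\mathcal{W}'_{\mathcal{P}}(n,\Phi)=\mathcal{W}_{\mathcal{P}}(n,\Phi')$; (ii) the nonexchangeable roommate problem with population $n$ and surplus $\Phi$ has a stable matching if and only if the (symmetric) roommate problem with population $n$ and surplus $\Phi'$ has a stable matching.
   Context: Nonexchangeable roommate problem: $n_x$ individuals of type $x$; an ordered pair $(x,y)$ (first partner of type $x$ in role 1, second of type $y$ in role 2; $x=y$ allowed) generates surplus $\Phi_{xy}$; singles get $0$. A matching is $\pi=(\pi_{xy})_{x,y\in\mathcal{X}}$, $\pi_{xy}\in\mathbb{N}$ the number of ordered $(x,y)$ pairs, with $\sum_{y\in\mathcal{X}}(\pi_{xy}+\pi_{yx})\le n_x$ for all $x$; its surplus is $\sum_{x,y}\pi_{xy}\Phi_{xy}$, and $\mathcal{W}'_{\mathcal{P}}(n,\Phi)$ is the maximum of this surplus over such $\pi$. A stable outcome is $(\pi,u)$ with $\pi$ feasible, $u\in\mathbb{R}^{\mathcal{X}}$, $\sum_x n_xu_x=\sum_{x,y}\pi_{xy}\Phi_{xy}$, $u_x\ge0$ and $u_x+u_y\ge\Phi_{xy}$ for all $x,y$; $\pi$ is a stable matching if such $u$ exists. Symmetric roommate problem with symmetric surplus $\Psi$: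 feasible matchings $\mathcal{P}(n)=\{\mu\in\mathbb{N}^{\mathcal{X}\times\mathcal{X}}:\ \mu_{xy}=\mu_{yx},\ 2\mu_{xx}+\sum_{y\ne x}\mu_{xy}\le n_x\ \forall x\}$, surplus $S_R(\mu;\Psi)=\sum_x\mu_{xx}\Psi_{xx}+\sum_{x\ne y}\mu_{xy}\Psi_{xy}/2$, $\mathcal{W}_{\mathcal{P}}(n,\Psi)=\max_{\mu\in\mathcal{P}(n)}S_R(\mu;\Psi)$; $\mu$ is stable if there is $u\in\mathbb{R}^{\mathcal{X}}$ with $\sum_x n_xu_x=S_R(\mu;\Psi)$, $u_x\ge0$, $u_x+u_y\ge\Psi_{xy}$ for all $x,y$. *)

theory Defs
  imports "HOL-Analysis.Analysis"
begin

definition ne_feasible :: "('x::finite \<Rightarrow> nat) \<Rightarrow> ('x \<Rightarrow> 'x \<Rightarrow> nat) \<Rightarrow> bool" where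
  "ne_feasible n \<pi> \<longleftrightarrow> (\<forall>x. (\<Sum>y\<in>UNIV. \<pi> x y + \<pi> y x) \<le> n x)"

definition ne_surplus :: "('x::finite \<Rightarrow> 'x \<Rightarrow> real) \<Rightarrow> ('x \<Rightarrow> 'x \<Rightarrow> nat) \<Rightarrow> real" where
  "ne_surplus \<Phi> \<pi> = (\<Sum>x\<in>UNIV. \<Sum>y\<in>UNIV. real (\<pi> x y) * \<Phi> x y)"

definition W_ne :: "('x::finite \<Rightarrow> nat) \<Rightarrow> ('x \<Rightarrow> 'x \<Rightarrow> real) \<Rightarrow> real" where
  "W_ne n \<Phi> = Max (ne_surplus \<Phi> ` {\<pi>. ne_feasible n \<pi>})"

definition ne_stable_outcome ::
  "('x::finite \<Rightarrow> nat) \<Rightarrow> ('x \<Rightarrow> 'x \<Rightarrow> real) \<Rightarrow> ('x \<Rightarrow> 'x \<Rightarrow> nat) \<Rightarrow> ('x \<Rightarrow> real) \<Rightarrow> bool" where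
  "ne_stable_outcome n \<Phi> \<pi> u \<longleftrightarrow> ne_feasible n \<pi>
     \<and> (\<Sum>x\<in>UNIV. real (n x) * u x) = ne_surplus \<Phi> \<pi>
     \<and> (\<forall>x. u x \<ge> 0) \<and> (\<forall>x y. u x + u y \<ge> \<Phi> x y)"

definition ne_stable_matching :: "('x::finite \<Rightarrow> nat) \<Rightarrow> ('x \<Rightarrow> 'x \<Rightarrow> real) \<Rightarrow> ('x \<Rightarrow> 'x \<Rightarrow> nat) \<Rightarrow> bool" where
  "ne_stable_matching n \<Phi> \<pi> \<longleftrightarrow> (\<exists>u. ne_stable_outcome n \<Phi> \<pi> u)"

definition P_feasible :: "('x::finite \<Rightarrow> nat) \<Rightarrow> ('x \<Rightarrow> 'x \<Rightarrow> nat) \<Rightarrow> bool" where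
  "P_feasible n \<mu> \<longleftrightarrow> (\<forall>x y. \<mu> x y = \<mu> y x)
     \<and> (\<forall>x. 2 * \<mu> x x + (\<Sum>y\<in>UNIV - {x}. \<mu> x y) \<le> n x)"

definition S_R :: "('x::finite \<Rightarrow> 'x \<Rightarrow> real) \<Rightarrow> ('x \<Rightarrow> 'x \<Rightarrow> nat) \<Rightarrow> real" where
  "S_R \<Psi> \<mu> = (\<Sum>x\<in>UNIV. real (\<mu> x x) * \<Psi> x x)
      + (\<Sum>x\<in>UNIV. \<Sum>y\<in>UNIV - {x}. real (\<mu> x y) * \<Psi> x y / 2)"

definition W_P :: "('x::finite \<Rightarrow> nat) \<Rightarrow> ('x \<Rightarrow> 'x \<Rightarrow> real) \<Rightarrow> real" where
  "W_P n \<Psi> = Max (S_R \<Psi> ` {\<mu>. P_feasible n \<mu>})"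

definition R_stable_matching :: "('x::finite \<Rightarrow> nat) \<Rightarrow> ('x \<Rightarrow> 'x \<Rightarrow> real) \<Rightarrow> ('x \<Rightarrow> 'x \<Rightarrow> nat) \<Rightarrow> bool" where
  "R_stable_matching n \<Psi> \<mu> \<longleftrightarrow> P_feasible n \<mu> \<and>
     (\<exists>u. (\<Sum>x\<in>UNIV. real (n x) * u x) = S_R \<Psi> \<mu>
        \<and> (\<forall>x. u x \<ge> 0) \<and> (\<forall>x y. u x + u y \<ge> \<Psi> x y))"

definition sym_max :: "('x \<Rightarrow> 'x \<Rightarrow> real) \<Rightarrow> ('x \<Rightarrow> 'x \<Rightarrow> real)" where
  "sym_max \<Phi> = (\<lambda>x y. max (\<Phi> x y) (\<Phi> y x))"

end

theory Submission
  imports Defs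
begin

lemma sum_split_diag:
  fixes g :: "'x::finite \<Rightarrow> 'a::comm_monoid_add"
  shows "(\<Sum>y\<in>UNIV. g y) = g x + (\<Sum>y\<in>UNIV - {x}. g y)"
  by (rule sum.remove) auto

lemma ne_surplus_sym:
  "ne_surplus \<Phi> \<pi> = (\<Sum>x\<in>UNIV. \<Sum>y\<in>UNIV. real (\<pi> x y) * \<Phi> x y + real (\<pi> y x) * \<Phi> y x) / 2"
proof -
  have "(\<Sum>x\<in>UNIV. \<Sum>y\<in>UNIV. real (\<pi> y x) * \<Phi> y x) = ne_surplus \<Phi> \<pi>"
    unfolding ne_surplus_def by (rule sum.swap)
  then show ?thesis unfolding sum.distrib ne_surplus_def by simp
qed

lemma S_R_alt:
  "S_R \<Psi> \<mu> = (\<Sum>x\<in>UNIV. 2 * (real (\<mu> x x) * \<Psi> x x) + (\<Sum>y\<in>UNIV - {x}. real (\<mu> x y) * \<Psi> x y)) / 2"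
proof -
  have a: "(\<Sum>x\<in>UNIV. \<Sum>y\<in>UNIV - {x}. real (\<mu> x y) * \<Psi> x y / 2)
     = (\<Sum>x\<in>UNIV. \<Sum>y\<in>UNIV - {x}. real (\<mu> x y) * \<Psi> x y) / 2"
    by (simp add: sum_divide_distrib)
  have b: "(\<Sum>x\<in>UNIV. 2 * (real (\<mu> x x) * \<Psi> x x)) = 2 * (\<Sum>x\<in>UNIV. real (\<mu> x x) * \<Psi> x x)"
    by (simp add: sum_distrib_left)
  show ?thesis unfolding S_R_def sum.distrib a b by simp
qed

lemma ne_sum_split:
  "(\<Sum>x\<in>UNIV. \<Sum>y\<in>UNIV. h x y) = (\<Sum>x\<in>(UNIV::'x::finite set). h x x + (\<Sum>y\<in>UNIV - {x}. h x y))"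
  by (rule sum.cong[OF refl], rule sum_split_diag)

definition Amap :: "('x \<Rightarrow> 'x \<Rightarrow> nat) \<Rightarrow> 'x \<Rightarrow> 'x \<Rightarrow> nat" where
  "Amap \<pi> = (\<lambda>x y. if x = y then \<pi> x x else \<pi> x y + \<pi> y x)"

definition cnd :: "('x::finite \<Rightarrow> 'x \<Rightarrow> real) \<Rightarrow> 'x \<Rightarrow> 'x \<Rightarrow> bool" where
  "cnd \<Phi> x y \<longleftrightarrow> \<Phi> x y > \<Phi> y x \<or> (\<Phi> x y = \<Phi> y x \<and> to_nat x < to_nat y)"

definition Bmap :: "('x::finite \<Rightarrow> 'x \<Rightarrow> real) \<Rightarrow> ('x \<Rightarrow> 'x \<Rightarrow> nat) \<Rightarrow> 'x \<Rightarrow> 'x \<Rightarrow> nat" where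
  "Bmap \<Phi> \<mu> = (\<lambda>x y. if x = y then \<mu> x x else if cnd \<Phi> x y then \<mu> x y else 0)"

lemma cnd_excl:
  assumes "x \<noteq> y"
  shows "cnd \<Phi> x y \<longleftrightarrow> \<not> cnd \<Phi> y x"
proof -
  have "to_nat x \<noteq> to_nat y" using assms by simp
  then have "to_nat x < to_nat y \<or> to_nat y < to_nat x" by linarith
  then show ?thesis unfolding cnd_def by auto
qed

lemma A_feasible:
  assumes "ne_feasible n \<pi>" shows "P_feasible n (Amap \<pi>)"
  unfolding P_feasible_def
proof (intro conjI allI)
  fix x y show "Amap \<pi> x y = Amap \<pi> y x" unfolding Amap_def by auto
next
  fix x
  have "(\<Sum>y\<in>UNIV. \<pi> x y + \<pi> y x) = (\<pi> x x + \<pi> x x) + (\<Sum>y\<in>UNIV - {x}. \<pi> x y + \<pi> y x)"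
    by (rule sum_split_diag)
  also have "(\<Sum>y\<in>UNIV - {x}. \<pi> x y + \<pi> y x) = (\<Sum>y\<in>UNIV - {x}. Amap \<pi> x y)"
    by (rule sum.cong) (auto simp: Amap_def)
  finally have e: "(\<Sum>y\<in>UNIV. \<pi> x y + \<pi> y x) = (\<pi> x x + \<pi> x x) + (\<Sum>y\<in>UNIV - {x}. Amap \<pi> x y)" .
  have "(\<Sum>y\<in>UNIV. \<pi> x y + \<pi> y x) \<le> n x" using assms unfolding ne_feasible_def by blast
  moreover have "Amap \<pi> x x = \<pi> x x" by (simp add: Amap_def)
  ultimately show "2 * Amap \<pi> x x + (\<Sum>y\<in>UNIV - {x}. Amap \<pi> x y) \<le> n x"
    using e by linarith
qed

lemma A_surplus:
  "ne_surplus \<Phi> \<pi> \<le> S_R (sym_max \<Phi>) (Amap \<pi>)"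
proof -
  have "ne_surplus \<Phi> \<pi> = (\<Sum>x\<in>UNIV. (real (\<pi> x x) * \<Phi> x x + real (\<pi> x x) * \<Phi> x x)
     + (\<Sum>y\<in>UNIV - {x}. real (\<pi> x y) * \<Phi> x y + real (\<pi> y x) * \<Phi> y x)) / 2"
    unfolding ne_surplus_sym ne_sum_split ..
  also have "\<dots> \<le> (\<Sum>x\<in>UNIV. 2 * (real (Amap \<pi> x x) * sym_max \<Phi> x x)
     + (\<Sum>y\<in>UNIV - {x}. real (Amap \<pi> x y) * sym_max \<Phi> x y)) / 2"
  proof -
    have "(\<Sum>y\<in>UNIV - {x}. real (\<pi> x y) * \<Phi> x y + real (\<pi> y x) * \<Phi> y x)
       \<le> (\<Sum>y\<in>UNIV - {x}. real (Amap \<pi> x y) * sym_max \<Phi> x y)" for x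
    proof (rule sum_mono)
      fix y assume "y \<in> UNIV - {x}"
      then have "Amap \<pi> x y = \<pi> x y + \<pi> y x" by (auto simp: Amap_def)
      moreover have "real (\<pi> x y) * \<Phi> x y \<le> real (\<pi> x y) * sym_max \<Phi> x y"
        by (rule mult_left_mono) (auto simp: sym_max_def)
      moreover have "real (\<pi> y x) * \<Phi> y x \<le> real (\<pi> y x) * sym_max \<Phi> x y"
        by (rule mult_left_mono) (auto simp: sym_max_def)
      ultimately show "real (\<pi> x y) * \<Phi> x y + real (\<pi> y x) * \<Phi> y x
         \<le> real (Amap \<pi> x y) * sym_max \<Phi> x y" by (simp add: distrib_right)
    qed
    then show ?thesis
      apply -
      apply (rule divide_right_mono)
       apply (rule sum_mono)
       apply (rule add_mono)
        apply (simp add: Amap_def sym_max_def)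
       apply assumption
      apply simp
      done
  qed
  also have "\<dots> = S_R (sym_max \<Phi>) (Amap \<pi>)" by (rule S_R_alt[symmetric])
  finally show ?thesis .
qed

lemma B_vals:
  assumes "P_feasible n \<mu>" "x \<noteq> y"
  shows "Bmap \<Phi> \<mu> x y + Bmap \<Phi> \<mu> y x = \<mu> x y"
    and "real (Bmap \<Phi> \<mu> x y) * \<Phi> x y + real (Bmap \<Phi> \<mu> y x) * \<Phi> y x
         = real (\<mu> x y) * sym_max \<Phi> x y"
proof -
  have s: "\<mu> y x = \<mu> x y" using assms(1) unfolding P_feasible_def by auto
  have e: "cnd \<Phi> x y \<longleftrightarrow> \<not> cnd \<Phi> y x" using cnd_excl[OF assms(2)] .
  show "Bmap \<Phi> \<mu> x y + Bmap \<Phi> \<mu> y x = \<mu> x y"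
    using assms(2) s e unfolding Bmap_def by auto
  show "real (Bmap \<Phi> \<mu> x y) * \<Phi> x y + real (Bmap \<Phi> \<mu> y x) * \<Phi> y x
         = real (\<mu> x y) * sym_max \<Phi> x y"
    using assms(2) s e unfolding Bmap_def sym_max_def cnd_def by (auto simp: max_def)
qed

lemma B_feasible:
  assumes "P_feasible n \<mu>" shows "ne_feasible n (Bmap \<Phi> \<mu>)"
  unfolding ne_feasible_def
proof
  fix x
  have "(\<Sum>y\<in>UNIV. Bmap \<Phi> \<mu> x y + Bmap \<Phi> \<mu> y x)
     = (Bmap \<Phi> \<mu> x x + Bmap \<Phi> \<mu> x x) + (\<Sum>y\<in>UNIV - {x}. Bmap \<Phi> \<mu> x y + Bmap \<Phi> \<mu> y x)"
    by (rule sum_split_diag)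
  also have "(\<Sum>y\<in>UNIV - {x}. Bmap \<Phi> \<mu> x y + Bmap \<Phi> \<mu> y x) = (\<Sum>y\<in>UNIV - {x}. \<mu> x y)"
    by (rule sum.cong) (use B_vals(1)[OF assms] in auto)
  finally have e: "(\<Sum>y\<in>UNIV. Bmap \<Phi> \<mu> x y + Bmap \<Phi> \<mu> y x)
     = (Bmap \<Phi> \<mu> x x + Bmap \<Phi> \<mu> x x) + (\<Sum>y\<in>UNIV - {x}. \<mu> x y)" .
  have "Bmap \<Phi> \<mu> x x = \<mu> x x" by (simp add: Bmap_def)
  moreover have "2 * \<mu> x x + (\<Sum>y\<in>UNIV - {x}. \<mu> x y) \<le> n x"
    using assms unfolding P_feasible_def by blast
  ultimately show "(\<Sum>y\<in>UNIV. Bmap \<Phi> \<mu> x y + Bmap \<Phi> \<mu> y x) \<le> n x"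
    using e by linarith
qed

lemma B_surplus:
  assumes "P_feasible n \<mu>"
  shows "ne_surplus \<Phi> (Bmap \<Phi> \<mu>) = S_R (sym_max \<Phi>) \<mu>"
proof -
  let ?p = "Bmap \<Phi> \<mu>"
  have "ne_surplus \<Phi> ?p = (\<Sum>x\<in>UNIV. (real (?p x x) * \<Phi> x x + real (?p x x) * \<Phi> x x)
     + (\<Sum>y\<in>UNIV - {x}. real (?p x y) * \<Phi> x y + real (?p y x) * \<Phi> y x)) / 2"
    unfolding ne_surplus_sym ne_sum_split ..
  also have "\<dots> = (\<Sum>x\<in>UNIV. 2 * (real (\<mu> x x) * sym_max \<Phi> x x)
     + (\<Sum>y\<in>UNIV - {x}. real (\<mu> x y) * sym_max \<Phi> x y)) / 2"
  proof -
    have "(\<Sum>y\<in>UNIV - {x}. real (?p x y) * \<Phi> x y + real (?p y x) * \<Phi> y x)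
      = (\<Sum>y\<in>UNIV - {x}. real (\<mu> x y) * sym_max \<Phi> x y)" for x
      by (rule sum.cong[OF refl]) (use B_vals(2)[OF assms] in auto)
    moreover have "?p x x = \<mu> x x" "sym_max \<Phi> x x = \<Phi> x x" for x
      by (auto simp: Bmap_def sym_max_def)
    ultimately show ?thesis by (simp add: mult.commute)
  qed
  also have "\<dots> = S_R (sym_max \<Phi>) \<mu>" by (rule S_R_alt[symmetric])
  finally show ?thesis .
qed

lemma weak_duality:
  assumes "ne_feasible n \<pi>" "\<forall>x. u x \<ge> 0" "\<forall>x y. u x + u y \<ge> \<Phi> x y"
  shows "ne_surplus \<Phi> \<pi> \<le> (\<Sum>x\<in>UNIV. real (n x) * u x)"
proof -
  have "ne_surplus \<Phi> \<pi> \<le> (\<Sum>x\<in>UNIV. \<Sum>y\<in>UNIV. real (\<pi> x y) * (u x + u y))"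
    unfolding ne_surplus_def using assms(3)
    by (intro sum_mono mult_left_mono) auto
  also have "\<dots> = (\<Sum>x\<in>UNIV. \<Sum>y\<in>UNIV. real (\<pi> x y) * u x) + (\<Sum>x\<in>UNIV. \<Sum>y\<in>UNIV. real (\<pi> x y) * u y)"
    by (simp add: distrib_left sum.distrib)
  also have "(\<Sum>x\<in>UNIV. \<Sum>y\<in>UNIV. real (\<pi> x y) * u y) = (\<Sum>x\<in>UNIV. \<Sum>y\<in>UNIV. real (\<pi> y x) * u x)"
    by (rule sum.swap)
  also have "(\<Sum>x\<in>UNIV. \<Sum>y\<in>UNIV. real (\<pi> x y) * u x) + (\<Sum>x\<in>UNIV. \<Sum>y\<in>UNIV. real (\<pi> y x) * u x)
      = (\<Sum>x\<in>UNIV. real (\<Sum>y\<in>UNIV. \<pi> x y + \<pi> y x) * u x)"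
  proof -
    have "(\<Sum>y\<in>UNIV. real (\<pi> x y) * u x) + (\<Sum>y\<in>UNIV. real (\<pi> y x) * u x)
       = real (\<Sum>y\<in>UNIV. \<pi> x y + \<pi> y x) * u x" for x
      by (simp add: sum.distrib sum_distrib_right[symmetric] distrib_right)
    then show ?thesis by (simp add: sum.distrib[symmetric])
  qed
  also have "\<dots> \<le> (\<Sum>x\<in>UNIV. real (n x) * u x)"
    using assms(1,2) unfolding ne_feasible_def
    by (intro sum_mono mult_right_mono) (auto simp del: of_nat_sum)
  finally show ?thesis .
qed

lemma fin_funs:
  "finite {\<pi> :: 'x::finite \<Rightarrow> 'x \<Rightarrow> nat. \<forall>x y. \<pi> x y \<le> N}"
proof -
  have "{\<pi> :: 'x \<Rightarrow> 'x \<Rightarrow> nat. \<forall>x y. \<pi> x y \<le> N} \<subseteq> PiE UNIV (\<lambda>_. PiE UNIV (\<lambda>_. {0..N}))"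
    by (auto simp: PiE_UNIV_domain)
  moreover have "finite (PiE (UNIV::'x set) (\<lambda>_. PiE (UNIV::'x set) (\<lambda>_. {0..N})))"
    by (intro finite_PiE) auto
  ultimately show ?thesis using finite_subset by blast
qed

lemma ne_fin: "finite {\<pi>. ne_feasible n \<pi>}"
proof -
  have "{\<pi>. ne_feasible n \<pi>} \<subseteq> {\<pi>. \<forall>x y. \<pi> x y \<le> Max (range n)}"
  proof (safe)
    fix \<pi> x y assume "ne_feasible n \<pi>"
    then have "(\<Sum>y\<in>UNIV. \<pi> x y + \<pi> y x) \<le> n x" unfolding ne_feasible_def by auto
    moreover have "\<pi> x y \<le> (\<Sum>y\<in>UNIV. \<pi> x y + \<pi> y x)"
      using member_le_sum[of y UNIV "\<lambda>y. \<pi> x y + \<pi> y x"] by auto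
    moreover have "n x \<le> Max (range n)" by simp
    ultimately show "\<pi> x y \<le> Max (range n)" by linarith
  qed
  then show ?thesis using fin_funs finite_subset by blast
qed

lemma P_fin: "finite {\<mu>. P_feasible n \<mu>}"
proof -
  have "{\<mu>. P_feasible n \<mu>} \<subseteq> {\<pi>. \<forall>x y. \<pi> x y \<le> Max (range n)}"
  proof (safe)
    fix \<mu> x y assume a: "P_feasible n \<mu>"
    then have b: "2 * \<mu> x x + (\<Sum>y\<in>UNIV - {x}. \<mu> x y) \<le> n x" unfolding P_feasible_def by auto
    have "\<mu> x y \<le> 2 * \<mu> x x + (\<Sum>y\<in>UNIV - {x}. \<mu> x y)"
    proof (cases "y = x")
      case False
      then show ?thesis using member_le_sum[of y "UNIV - {x}" "\<lambda>y. \<mu> x y"] by auto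
    qed auto
    moreover have "n x \<le> Max (range n)" by simp
    ultimately show "\<mu> x y \<le> Max (range n)" using b by linarith
  qed
  then show ?thesis using fin_funs finite_subset by blast
qed

lemma ne_ne: "{\<pi>. ne_feasible n \<pi>} \<noteq> {}"
proof -
  have "ne_feasible n (\<lambda>_ _. 0)" unfolding ne_feasible_def by simp
  then show ?thesis by blast
qed

lemma P_ne: "{\<mu>. P_feasible n \<mu>} \<noteq> {}"
proof -
  have "P_feasible n (\<lambda>_ _. 0)" unfolding P_feasible_def by simp
  then show ?thesis by blast
qed

lemma dual_iff: "(\<forall>x y. u x + u y \<ge> \<Phi> x y) \<longleftrightarrow> (\<forall>x y. u x + u y \<ge> sym_max \<Phi> x y)"
  unfolding sym_max_def by (metis add.commute max.bounded_iff)

theorem theorem4: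
  fixes n :: "'x::finite \<Rightarrow> nat" and \<Phi> :: "'x \<Rightarrow> 'x \<Rightarrow> real"
  shows "W_ne n \<Phi> = W_P n (sym_max \<Phi>) \<and>
         ((\<exists>\<pi>. ne_stable_matching n \<Phi> \<pi>) \<longleftrightarrow> (\<exists>\<mu>. R_stable_matching n (sym_max \<Phi>) \<mu>))"
proof (intro conjI iffI)
  have f1: "finite (ne_surplus \<Phi> ` {\<pi>. ne_feasible n \<pi>})" using ne_fin[of n] by simp
  have f2: "finite (S_R (sym_max \<Phi>) ` {\<mu>. P_feasible n \<mu>})" using P_fin[of n] by simp
  have n1: "ne_surplus \<Phi> ` {\<pi>. ne_feasible n \<pi>} \<noteq> {}" using ne_ne by simp
  have n2: "S_R (sym_max \<Phi>) ` {\<mu>. P_feasible n \<mu>} \<noteq> {}" using P_ne by simp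
  show "W_ne n \<Phi> = W_P n (sym_max \<Phi>)"
  proof (rule antisym)
    obtain \<pi> where p: "ne_feasible n \<pi>" "W_ne n \<Phi> = ne_surplus \<Phi> \<pi>"
      using Max_in[OF f1 n1] unfolding W_ne_def by auto
    have "ne_surplus \<Phi> \<pi> \<le> S_R (sym_max \<Phi>) (Amap \<pi>)" by (rule A_surplus)
    also have "\<dots> \<le> W_P n (sym_max \<Phi>)" unfolding W_P_def
      by (rule Max_ge[OF f2]) (use A_feasible[OF p(1)] in auto)
    finally show "W_ne n \<Phi> \<le> W_P n (sym_max \<Phi>)" using p by simp
  next
    obtain \<mu> where p: "P_feasible n \<mu>" "W_P n (sym_max \<Phi>) = S_R (sym_max \<Phi>) \<mu>"
      using Max_in[OF f2 n2] unfolding W_P_def by auto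
    have "S_R (sym_max \<Phi>) \<mu> = ne_surplus \<Phi> (Bmap \<Phi> \<mu>)" by (rule B_surplus[OF p(1), symmetric])
    also have "\<dots> \<le> W_ne n \<Phi>" unfolding W_ne_def
      by (rule Max_ge[OF f1]) (use B_feasible[OF p(1)] in auto)
    finally show "W_P n (sym_max \<Phi>) \<le> W_ne n \<Phi>" using p by simp
  qed
next
  assume "\<exists>\<pi>. ne_stable_matching n \<Phi> \<pi>"
  then obtain \<pi> u where s: "ne_stable_outcome n \<Phi> \<pi> u" unfolding ne_stable_matching_def by auto
  then have fe: "ne_feasible n \<pi>" and eq: "(\<Sum>x\<in>UNIV. real (n x) * u x) = ne_surplus \<Phi> \<pi>"
    and u0: "\<forall>x. u x \<ge> 0" and ud: "\<forall>x y. u x + u y \<ge> \<Phi> x y"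
    unfolding ne_stable_outcome_def by auto
  let ?m = "Amap \<pi>"
  have pf: "P_feasible n ?m" by (rule A_feasible[OF fe])
  have "S_R (sym_max \<Phi>) ?m = ne_surplus \<Phi> (Bmap \<Phi> ?m)" by (rule B_surplus[OF pf, symmetric])
  also have "\<dots> \<le> (\<Sum>x\<in>UNIV. real (n x) * u x)"
    by (rule weak_duality[OF B_feasible[OF pf] u0 ud])
  finally have "S_R (sym_max \<Phi>) ?m = (\<Sum>x\<in>UNIV. real (n x) * u x)"
    using A_surplus[of \<Phi> \<pi>] eq by linarith
  then show "\<exists>\<mu>. R_stable_matching n (sym_max \<Phi>) \<mu>"
    unfolding R_stable_matching_def using pf u0 ud dual_iff by metis
next
  assume "\<exists>\<mu>. R_stable_matching n (sym_max \<Phi>) \<mu>"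
  then obtain \<mu> u where pf: "P_feasible n \<mu>" and eq: "(\<Sum>x\<in>UNIV. real (n x) * u x) = S_R (sym_max \<Phi>) \<mu>"
    and u0: "\<forall>x. u x \<ge> 0" and ud: "\<forall>x y. u x + u y \<ge> sym_max \<Phi> x y"
    unfolding R_stable_matching_def by auto
  have "ne_stable_outcome n \<Phi> (Bmap \<Phi> \<mu>) u"
    unfolding ne_stable_outcome_def
    using B_feasible[OF pf] B_surplus[OF pf] eq u0 ud dual_iff by metis
  then show "\<exists>\<pi>. ne_stable_matching n \<Phi> \<pi>" unfolding ne_stable_matching_def by auto
qed

end
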